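(* The abelian Lie superalgebra $A(m\mid n)$ is capable if and only if either $m=0,n=1$ or $m+n\ge 2$.
   Context: All algebras are over a field $\mathbb{F}$ of characteristic $\neq 2,3$. $A(m\mid n)$ denotes the abelian Lie superalgebra with even part of dimension $m$ and odd part of dimension $n$. A Lie superalgebra $L$ is capable if $L\cong H/Z(H)$ for some Lie superalgebra $H$, where $Z(H)$ is the center of $H$. *)

theory Defs
  imports Main
begin

record ('v, 'f) lsa =
  scar  :: "'v set"
  szero :: "'v"
  sadd  :: "'v \<Rightarrow> 'v \<Rightarrow> 'v"
  ssmul :: "'f \<Rightarrow> 'v \<Rightarrow> 'v"
  sbr   :: "'v \<Rightarrow> 'v \<Rightarrow> 'v"
  sev   :: "'v set"
  sod   :: "'v set"

definition vspace :: "('v, 'f::field) lsa \<Rightarrow> bool" where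
  "vspace L \<longleftrightarrow>
     szero L \<in> scar L \<and>
     (\<forall>x\<in>scar L. \<forall>y\<in>scar L. sadd L x y \<in> scar L) \<and>
     (\<forall>c. \<forall>x\<in>scar L. ssmul L c x \<in> scar L) \<and>
     (\<forall>x\<in>scar L. \<forall>y\<in>scar L. \<forall>z\<in>scar L. sadd L (sadd L x y) z = sadd L x (sadd L y z)) \<and>
     (\<forall>x\<in>scar L. \<forall>y\<in>scar L. sadd L x y = sadd L y x) \<and>
     (\<forall>x\<in>scar L. sadd L (szero L) x = x) \<and>
     (\<forall>x\<in>scar L. \<exists>y\<in>scar L. sadd L x y = szero L) \<and>
     (\<forall>c. \<forall>x\<in>scar L. \<forall>y\<in>scar L. ssmul L c (sadd L x y) = sadd L (ssmul L c x) (ssmul L c y)) \<and>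
     (\<forall>a b. \<forall>x\<in>scar L. ssmul L (a + b) x = sadd L (ssmul L a x) (ssmul L b x)) \<and>
     (\<forall>a b. \<forall>x\<in>scar L. ssmul L a (ssmul L b x) = ssmul L (a * b) x) \<and>
     (\<forall>x\<in>scar L. ssmul L 1 x = x)"

definition subspace_of :: "'v set \<Rightarrow> ('v, 'f::field) lsa \<Rightarrow> bool" where
  "subspace_of S L \<longleftrightarrow> S \<subseteq> scar L \<and> szero L \<in> S \<and>
     (\<forall>x\<in>S. \<forall>y\<in>S. sadd L x y \<in> S) \<and> (\<forall>c. \<forall>x\<in>S. ssmul L c x \<in> S)"

definition homog :: "('v, 'f) lsa \<Rightarrow> nat \<Rightarrow> 'v set" where
  "homog L d = (if d = 0 then sev L else sod L)"

definition ssign :: "nat \<Rightarrow> nat \<Rightarrow> 'f::field" where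
  "ssign d e = (-1) ^ (d * e)"

definition lie_superalgebra :: "('v, 'f::field) lsa \<Rightarrow> bool" where
  "lie_superalgebra L \<longleftrightarrow>
     vspace L \<and>
     subspace_of (sev L) L \<and> subspace_of (sod L) L \<and>
     sev L \<inter> sod L = {szero L} \<and>
     (\<forall>x\<in>scar L. \<exists>a\<in>sev L. \<exists>b\<in>sod L. x = sadd L a b) \<and>
     (\<forall>x\<in>scar L. \<forall>y\<in>scar L. sbr L x y \<in> scar L) \<and>
     (\<forall>x\<in>scar L. \<forall>y\<in>scar L. \<forall>z\<in>scar L. sbr L (sadd L x y) z = sadd L (sbr L x z) (sbr L y z)) \<and>
     (\<forall>x\<in>scar L. \<forall>y\<in>scar L. \<forall>z\<in>scar L. sbr L x (sadd L y z) = sadd L (sbr L x y) (sbr L x z)) \<and>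
     (\<forall>c. \<forall>x\<in>scar L. \<forall>y\<in>scar L. sbr L (ssmul L c x) y = ssmul L c (sbr L x y)) \<and>
     (\<forall>c. \<forall>x\<in>scar L. \<forall>y\<in>scar L. sbr L x (ssmul L c y) = ssmul L c (sbr L x y)) \<and>
     (\<forall>d\<in>{0,1}. \<forall>e\<in>{0,1}. \<forall>x\<in>homog L d. \<forall>y\<in>homog L e.
        sbr L x y \<in> homog L ((d + e) mod 2)) \<and>
     (\<forall>d\<in>{0,1}. \<forall>e\<in>{0,1}. \<forall>x\<in>homog L d. \<forall>y\<in>homog L e.
        sbr L x y = ssmul L (- ssign d e) (sbr L y x)) \<and>
     (\<forall>d\<in>{0,1}. \<forall>e\<in>{0,1}. \<forall>f\<in>{0,1}.
        \<forall>x\<in>homog L d. \<forall>y\<in>homog L e. \<forall>z\<in>homog L f.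
        sadd L (sadd L (ssmul L (ssign d f) (sbr L x (sbr L y z)))
                       (ssmul L (ssign e d) (sbr L y (sbr L z x))))
               (ssmul L (ssign f e) (sbr L z (sbr L x y))) = szero L)"

definition center :: "('v, 'f) lsa \<Rightarrow> 'v set" where
  "center L = {z \<in> scar L. \<forall>x\<in>scar L. sbr L z x = szero L}"

definition coset :: "('v, 'f) lsa \<Rightarrow> 'v set \<Rightarrow> 'v \<Rightarrow> 'v set" where
  "coset L I x = {sadd L x z | z. z \<in> I}"

definition quot :: "('v, 'f) lsa \<Rightarrow> 'v set \<Rightarrow> ('v set, 'f) lsa" where
  "quot L I = \<lparr> scar = coset L I ` scar L,
                szero = coset L I (szero L),
                sadd = (\<lambda>A B. {sadd L a b | a b. a \<in> A \<and> b \<in> B}),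
                ssmul = (\<lambda>c A. {sadd L (ssmul L c a) z | a z. a \<in> A \<and> z \<in> I}),
                sbr = (\<lambda>A B. {sadd L (sbr L a b) z | a b z. a \<in> A \<and> b \<in> B \<and> z \<in> I}),
                sev = coset L I ` sev L,
                sod = coset L I ` sod L \<rparr>"

definition lsa_iso :: "('v, 'f) lsa \<Rightarrow> ('w, 'f) lsa \<Rightarrow> bool" where
  "lsa_iso L M \<longleftrightarrow> (\<exists>\<phi>. bij_betw \<phi> (scar L) (scar M) \<and>
     (\<forall>x\<in>scar L. \<forall>y\<in>scar L. \<phi> (sadd L x y) = sadd M (\<phi> x) (\<phi> y)) \<and>
     (\<forall>c. \<forall>x\<in>scar L. \<phi> (ssmul L c x) = ssmul M c (\<phi> x)) \<and>
     (\<forall>x\<in>scar L. \<forall>y\<in>scar L. \<phi> (sbr L x y) = sbr M (\<phi> x) (\<phi> y)) \<and>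
     \<phi> ` sev L = sev M \<and> \<phi> ` sod L = sod M)"

definition capable_in :: "'h itself \<Rightarrow> ('v, 'f::field) lsa \<Rightarrow> bool" where
  "capable_in (_ :: 'h itself) L \<longleftrightarrow>
     (\<exists>H :: ('h, 'f) lsa. lie_superalgebra H \<and> lsa_iso L (quot H (center H)))"

text \<open>The abelian Lie superalgebra A(m|n), realised as F^(m+n) (vectors
nat => F supported on {0..<m+n}); coordinates < m even, the others odd.\<close>
definition abelian_lsa :: "nat \<Rightarrow> nat \<Rightarrow> (nat \<Rightarrow> 'f::field, 'f) lsa" where
  "abelian_lsa m n = \<lparr> scar = {v. \<forall>i\<ge>m + n. v i = 0},
                       szero = (\<lambda>_. 0),
                       sadd = (\<lambda>v w i. v i + w i),
                       ssmul = (\<lambda>c v i. c * v i),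
                       sbr = (\<lambda>_ _ _. 0),
                       sev = {v. \<forall>i\<ge>m. v i = 0},
                       sod = {v. (\<forall>i\<ge>m + n. v i = 0) \<and> (\<forall>i<m. v i = 0)} \<rparr>"

end

theory Submission
  imports Defs
begin


lemma vs_facts:
  assumes V: "vspace L"
  shows "szero L \<in> scar L"
    and "\<And>x y. x \<in> scar L \<Longrightarrow> y \<in> scar L \<Longrightarrow> sadd L x y \<in> scar L"
    and "\<And>c x. x \<in> scar L \<Longrightarrow> ssmul L c x \<in> scar L"
    and "\<And>x y z. x \<in> scar L \<Longrightarrow> y \<in> scar L \<Longrightarrow> z \<in> scar L \<Longrightarrow> sadd L (sadd L x y) z = sadd L x (sadd L y z)"
    and "\<And>x y. x \<in> scar L \<Longrightarrow> y \<in> scar L \<Longrightarrow> sadd L x y = sadd L y x"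
    and "\<And>x. x \<in> scar L \<Longrightarrow> sadd L (szero L) x = x"
    and "\<And>x. x \<in> scar L \<Longrightarrow> \<exists>y\<in>scar L. sadd L x y = szero L"
    and "\<And>c x y. x \<in> scar L \<Longrightarrow> y \<in> scar L \<Longrightarrow> ssmul L c (sadd L x y) = sadd L (ssmul L c x) (ssmul L c y)"
    and "\<And>a b x. x \<in> scar L \<Longrightarrow> ssmul L (a + b) x = sadd L (ssmul L a x) (ssmul L b x)"
    and "\<And>a b x. x \<in> scar L \<Longrightarrow> ssmul L a (ssmul L b x) = ssmul L (a * b) x"
    and "\<And>x. x \<in> scar L \<Longrightarrow> ssmul L 1 x = x"
  by (meson V[unfolded vspace_def])+

lemma vs_cancel:
  assumes V: "vspace L" and x: "x \<in> scar L" and y: "y \<in> scar L" and e: "sadd L x y = x"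
  shows "y = szero L"
proof -
  note F = vs_facts[OF V]
  obtain x' where x': "x' \<in> scar L" "sadd L x x' = szero L" using F(7)[OF x] by blast
  have "sadd L x' (sadd L x y) = sadd L x' x" using e by simp
  moreover have "sadd L x' (sadd L x y) = y"
    using F(4)[OF x' (1) x y, symmetric] F(5)[OF x x'(1)] x'(2) F(6)[OF y] by simp
  moreover have "sadd L x' x = szero L" using F(5)[OF x x'(1)] x'(2) by simp
  ultimately show ?thesis by simp
qed

lemma vs_smul_zero:
  assumes V: "vspace L" shows "ssmul L c (szero L) = szero L"
proof -
  note F = vs_facts[OF V]
  have "ssmul L c (szero L) = ssmul L c (sadd L (szero L) (szero L))" using F(6)[OF F(1)] by simp
  also have "\<dots> = sadd L (ssmul L c (szero L)) (ssmul L c (szero L))" using F(8)[OF F(1) F(1)] .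
  finally show ?thesis using vs_cancel[OF V F(3)[OF F(1)] F(3)[OF F(1)]] by metis
qed

lemma vs_zero_smul:
  assumes V: "vspace L" and x: "x \<in> scar L" shows "ssmul L 0 x = szero L"
proof -
  note F = vs_facts[OF V]
  have "ssmul L 0 x = ssmul L (0+0) x" by simp
  also have "\<dots> = sadd L (ssmul L 0 x) (ssmul L 0 x)" using F(9)[OF x] .
  finally show ?thesis using vs_cancel[OF V F(3)[OF x] F(3)[OF x]] by metis
qed

lemma vs_add_zero:
  assumes V: "vspace L" and x: "x \<in> scar L" shows "sadd L x (szero L) = x"
  using vs_facts[OF V] x by metis

lemma vs_neg:
  assumes V: "vspace L" and x: "x \<in> scar L" shows "sadd L x (ssmul L (-1) x) = szero L"
proof -
  note F = vs_facts[OF V]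
  have "sadd L x (ssmul L (-1) x) = sadd L (ssmul L 1 x) (ssmul L (-1) x)" using F(11)[OF x] by simp
  also have "\<dots> = ssmul L (1 + -1) x" using F(9)[OF x, of 1 "-1"] by simp
  also have "\<dots> = szero L" using vs_zero_smul[OF V x] by simp
  finally show ?thesis .
qed

lemma vs_self_neg:
  assumes V: "vspace L" and x: "x \<in> scar L" and two: "(2::'f::field) \<noteq> 0"
    and e: "x = ssmul L (-1::'f) x"
  shows "x = szero L"
proof -
  note F = vs_facts[OF V]
  have "ssmul L (2::'f) x = sadd L x x" using F(9)[OF x, of 1 1] F(11)[OF x] by (metis one_add_one)
  also have "\<dots> = szero L" using vs_neg[OF V x] e by metis
  finally have "ssmul L (inverse 2) (ssmul L (2::'f) x) = szero L" using vs_smul_zero[OF V] by metis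
  thus ?thesis using F(10)[OF x] F(11)[OF x] two by simp
qed

lemma lsa_facts:
  assumes H: "lie_superalgebra L"
  shows "vspace L" "subspace_of (sev L) L" "subspace_of (sod L) L"
    and "\<And>x. x\<in>scar L \<Longrightarrow> \<exists>a\<in>sev L. \<exists>b\<in>sod L. x = sadd L a b"
    and "\<And>x y. x\<in>scar L \<Longrightarrow> y\<in>scar L \<Longrightarrow> sbr L x y \<in> scar L"
    and "\<And>x y z. x\<in>scar L \<Longrightarrow> y\<in>scar L \<Longrightarrow> z\<in>scar L \<Longrightarrow> sbr L (sadd L x y) z = sadd L (sbr L x z) (sbr L y z)"
    and "\<And>x y z. x\<in>scar L \<Longrightarrow> y\<in>scar L \<Longrightarrow> z\<in>scar L \<Longrightarrow> sbr L x (sadd L y z) = sadd L (sbr L x y) (sbr L x z)"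
    and "\<And>c x y. x\<in>scar L \<Longrightarrow> y\<in>scar L \<Longrightarrow> sbr L (ssmul L c x) y = ssmul L c (sbr L x y)"
    and "\<And>d e x y. d\<in>{0,1} \<Longrightarrow> e\<in>{0,1} \<Longrightarrow> x\<in>homog L d \<Longrightarrow> y\<in>homog L e \<Longrightarrow>
        sbr L x y = ssmul L (- ssign d e) (sbr L y x)"
  by (meson H[unfolded lie_superalgebra_def])+

lemma not_capable_1_0:
  assumes two: "(2::'f::field) \<noteq> 0"
  shows "\<not> capable_in TYPE('h) (abelian_lsa 1 0 :: (nat \<Rightarrow> 'f, 'f) lsa)"
proof
  assume "capable_in TYPE('h) (abelian_lsa 1 0 :: (nat \<Rightarrow> 'f, 'f) lsa)"
  then obtain H :: "('h,'f) lsa" where H: "lie_superalgebra H"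
    and iso: "lsa_iso (abelian_lsa 1 0 :: (nat \<Rightarrow> 'f, 'f) lsa) (quot H (center H))"
    unfolding capable_in_def by blast
  define A where "A = (abelian_lsa 1 0 :: (nat \<Rightarrow> 'f, 'f) lsa)"
  define Z where "Z = center H"
  define Q where "Q = quot H Z"
  have iso': "lsa_iso A Q" using iso unfolding A_def Q_def Z_def .
  obtain \<phi> where bij: "bij_betw \<phi> (scar A) (scar Q)"
    and "\<forall>x\<in>scar A. \<forall>y\<in>scar A. \<phi> (sadd A x y) = sadd Q (\<phi> x) (\<phi> y)"
    and sm': "\<forall>c. \<forall>x\<in>scar A. \<phi> (ssmul A c x) = ssmul Q c (\<phi> x)"
    and "\<forall>x\<in>scar A. \<forall>y\<in>scar A. \<phi> (sbr A x y) = sbr Q (\<phi> x) (\<phi> y)"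
    and ev: "\<phi> ` sev A = sev Q" and "\<phi> ` sod A = sod Q"
    using iso' unfolding lsa_iso_def apply (elim exE conjE) apply (rule that) by assumption+
  have sm: "\<And>c x. x\<in>scar A \<Longrightarrow> \<phi> (ssmul A c x) = ssmul Q c (\<phi> x)" using sm' by blast
  note L = lsa_facts[OF H]
  note V = L(1)
  note F = vs_facts[OF V]
  have ZH: "Z \<subseteq> scar H" unfolding Z_def center_def by auto
  have Zb: "\<And>z x. z \<in> Z \<Longrightarrow> x \<in> scar H \<Longrightarrow> sbr H z x = szero H" unfolding Z_def center_def by auto
  have Z0: "szero H \<in> Z"
  proof -
    have "\<And>x. x \<in> scar H \<Longrightarrow> sbr H (szero H) x = szero H"
    proof -
      fix x assume x: "x \<in> scar H"
      have "sbr H (szero H) x = sbr H (ssmul H 0 (szero H)) x" using vs_zero_smul[OF V F(1)] by simp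
      also have "\<dots> = ssmul H 0 (sbr H (szero H) x)" using L(8)[OF F(1) x] .
      also have "\<dots> = szero H" using vs_zero_smul[OF V L(5)[OF F(1) x]] .
      finally show "sbr H (szero H) x = szero H" .
    qed
    thus ?thesis unfolding Z_def center_def using F(1) by auto
  qed
  have Zadd: "\<And>z1 z2. z1 \<in> Z \<Longrightarrow> z2 \<in> Z \<Longrightarrow> sadd H z1 z2 \<in> Z"
  proof -
    fix z1 z2 assume z: "z1 \<in> Z" "z2 \<in> Z"
    have "sbr H (sadd H z1 z2) x = szero H" if x: "x \<in> scar H" for x
    proof -
      have "sbr H (sadd H z1 z2) x = sadd H (sbr H z1 x) (sbr H z2 x)" using L(6) z ZH x by blast
      thus ?thesis using Zb[OF z(1) x] Zb[OF z(2) x] F(6)[OF F(1)] by simp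
    qed
    thus "sadd H z1 z2 \<in> Z" unfolding Z_def center_def using F(2) z ZH by (auto simp: Z_def)
  qed
  define e where "e = (\<lambda>i::nat. if i = 0 then (1::'f) else 0)"
  have e: "e \<in> scar A" "e \<in> sev A"
    unfolding A_def abelian_lsa_def e_def by auto
  have "\<phi> e \<in> sev Q" using ev e by blast
  then obtain g where g: "g \<in> sev H" and ge: "\<phi> e = coset H Z g" unfolding Q_def quot_def by auto
  have gH: "g \<in> scar H" using g L(2) unfolding subspace_of_def by auto
  have repr: "\<exists>c z1 z2. z1 \<in> Z \<and> z2 \<in> Z \<and> h = sadd H (ssmul H c (sadd H g z1)) z2"
    if h: "h \<in> scar H" for h
  proof -
    have "coset H Z h \<in> scar Q" unfolding Q_def quot_def using h by simp
    then obtain a where a: "a \<in> scar A" "coset H Z h = \<phi> a"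
      using bij unfolding bij_betw_def by auto
    have "a = ssmul A (a 0) e" using a(1) unfolding A_def abelian_lsa_def e_def
      by (auto simp: fun_eq_iff)
    hence "\<phi> a = ssmul Q (a 0) (\<phi> e)" using sm[OF e(1), of "a 0"] by metis
    hence ce: "coset H Z h = {sadd H (ssmul H (a 0) x) z | x z. x \<in> coset H Z g \<and> z \<in> Z}"
      using a(2) ge unfolding Q_def quot_def by simp
    have "h \<in> coset H Z h" unfolding coset_def using Z0 vs_add_zero[OF V h] by force
    then obtain x z where "x \<in> coset H Z g" "z \<in> Z" "h = sadd H (ssmul H (a 0) x) z"
      using ce by auto
    thus ?thesis unfolding coset_def by auto
  qed
  have gg: "sbr H g g = szero H"
  proof -
    have "sbr H g g = ssmul H (- ssign 0 0) (sbr H g g)" by (rule L(9)) (auto simp: homog_def g)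
    moreover have "- ssign 0 0 = (-1::'f)" by (simp add: ssign_def)
    ultimately have "sbr H g g = ssmul H (-1) (sbr H g g)" by metis
    thus ?thesis by (rule vs_self_neg[OF V L(5)[OF gH gH] two])
  qed
  have yg: "sbr H y g = szero H" if y: "y \<in> scar H" for y
  proof -
    obtain c z1 z2 where z: "z1 \<in> Z" "z2 \<in> Z" and yy: "y = sadd H (ssmul H c (sadd H g z1)) z2"
      using repr[OF y] by blast
    have z1: "z1 \<in> scar H" and z2: "z2 \<in> scar H" using z ZH by auto
    have "sbr H y g = sadd H (ssmul H c (sadd H (sbr H g g) (sbr H z1 g))) (sbr H z2 g)"
      unfolding yy using L(6) L(8) F(2) F(3) z1 z2 gH by simp
    also have "\<dots> = szero H" using gg Zb[OF z(1) gH] Zb[OF z(2) gH] F(6)[OF F(1)]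
      vs_smul_zero[OF V] by simp
    finally show ?thesis .
  qed
  have gy: "sbr H g y = szero H" if y: "y \<in> scar H" for y
  proof -
    obtain a b where ab: "a \<in> sev H" "b \<in> sod H" "y = sadd H a b" using L(4)[OF y] by blast
    have aH: "a \<in> scar H" and bH: "b \<in> scar H" using ab L(2) L(3) unfolding subspace_of_def by auto
    have "sbr H g a = ssmul H (- ssign 0 0) (sbr H a g)" by (rule L(9)) (auto simp: homog_def g ab)
    hence 1: "sbr H g a = szero H" using yg[OF aH] vs_smul_zero[OF V] by simp
    have "sbr H g b = ssmul H (- ssign 0 1) (sbr H b g)" by (rule L(9)) (auto simp: homog_def g ab)
    hence 2: "sbr H g b = szero H" using yg[OF bH] vs_smul_zero[OF V] by simp
    show ?thesis using L(7)[OF gH aH bH] ab(3) 1 2 F(6)[OF F(1)] by simp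
  qed
  have allZ: "h \<in> Z" if h: "h \<in> scar H" for h
  proof -
    have "sbr H h y = szero H" if y: "y \<in> scar H" for y
    proof -
      obtain c z1 z2 where z: "z1 \<in> Z" "z2 \<in> Z" and hh: "h = sadd H (ssmul H c (sadd H g z1)) z2"
        using repr[OF h] by blast
      have z1: "z1 \<in> scar H" and z2: "z2 \<in> scar H" using z ZH by auto
      have "sbr H h y = sadd H (ssmul H c (sadd H (sbr H g y) (sbr H z1 y))) (sbr H z2 y)"
        unfolding hh using L(6) L(8) F(2) F(3) z1 z2 gH y by simp
      also have "\<dots> = szero H" using gy[OF y] Zb[OF z(1) y] Zb[OF z(2) y] F(6)[OF F(1)]
        vs_smul_zero[OF V] by simp
      finally show ?thesis .
    qed
    thus ?thesis using h unfolding Z_def center_def by auto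
  qed
  have cos: "coset H Z h = scar H" if h: "h \<in> scar H" for h
  proof
    show "coset H Z h \<subseteq> scar H" unfolding coset_def using h ZH F(2) by auto
    show "scar H \<subseteq> coset H Z h"
    proof
      fix y assume y: "y \<in> scar H"
      have nh: "ssmul H (-1) h \<in> scar H" using F(3) h by simp
      have "sadd H h (sadd H (ssmul H (-1) h) y) = sadd H (sadd H h (ssmul H (-1) h)) y"
        using F(4)[OF h nh y] by simp
      also have "\<dots> = y" using vs_neg[OF V h] F(6)[OF y] by simp
      finally show "y \<in> coset H Z h" unfolding coset_def using allZ F(2)[OF nh y] by force
    qed
  qed
  have z0A: "szero A \<in> scar A" unfolding A_def abelian_lsa_def by simp
  have "\<phi> e \<in> scar Q" "\<phi> (szero A) \<in> scar Q" using bij e(1) z0A unfolding bij_betw_def by auto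
  hence "\<phi> e = scar H" "\<phi> (szero A) = scar H" unfolding Q_def quot_def using cos by auto
  hence "e = szero A" using bij e(1) z0A unfolding bij_betw_def inj_on_def by metis
  hence "e 0 = szero A 0" by simp
  thus False unfolding e_def A_def abelian_lsa_def by simp
qed



definition qpar :: "nat \<Rightarrow> nat \<Rightarrow> nat \<Rightarrow> bool" where
 "qpar m n t = (if t < m + n then m \<le> t
     else if t < (m+n) + (m+n)*(m+n) then ((m \<le> (t-(m+n)) div (m+n)) \<noteq> (m \<le> (t-(m+n)) mod (m+n))) else False)"

definition sg :: "nat \<Rightarrow> nat \<Rightarrow> nat \<Rightarrow> 'f::field" where
 "sg m i j = (if m \<le> i \<and> m \<le> j then -1 else 1)"

definition hbr :: "nat \<Rightarrow> nat \<Rightarrow> (nat \<Rightarrow> 'f::field) \<Rightarrow> (nat \<Rightarrow> 'f) \<Rightarrow> nat \<Rightarrow> 'f" where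
 "hbr m n v w t = (if m + n \<le> t \<and> t < (m+n) + (m+n)*(m+n) then
     v ((t-(m+n)) div (m+n)) * w ((t-(m+n)) mod (m+n))
       - sg m ((t-(m+n)) div (m+n)) ((t-(m+n)) mod (m+n)) * v ((t-(m+n)) mod (m+n)) * w ((t-(m+n)) div (m+n))
     else 0)"

definition HH :: "nat \<Rightarrow> nat \<Rightarrow> (nat \<Rightarrow> 'f::field, 'f) lsa" where
 "HH m n = \<lparr> scar = {v. \<forall>t\<ge>(m+n) + (m+n)*(m+n). v t = 0},
             szero = (\<lambda>_. 0),
             sadd = (\<lambda>v w i. v i + w i),
             ssmul = (\<lambda>c v i. c * v i),
             sbr = hbr m n,
             sev = {v. (\<forall>t\<ge>(m+n) + (m+n)*(m+n). v t = 0) \<and> (\<forall>t. qpar m n t \<longrightarrow> v t = 0)},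
             sod = {v. (\<forall>t\<ge>(m+n) + (m+n)*(m+n). v t = 0) \<and> (\<forall>t. \<not> qpar m n t \<longrightarrow> v t = 0)} \<rparr>"

lemma range_ij:
  fixes k t :: nat
  assumes "k \<le> t" "t < k + k*k"
  shows "(t-k) div k < k" "(t-k) mod k < k"
proof -
  have kp: "k > 0" using assms by (cases k) auto
  have "t - k < k * k" using assms by simp
  thus "(t-k) div k < k" using kp by (simp add: div_less_iff_less_mult)
  show "(t-k) mod k < k" using kp by simp
qed

lemma hbr_zero_args:
  "w ((t-(m+n)) div (m+n)) = 0 \<Longrightarrow> w ((t-(m+n)) mod (m+n)) = 0 \<Longrightarrow> hbr m n x w t = 0"
  unfolding hbr_def by simp

lemma hbr_small: "i < m + n \<Longrightarrow> hbr m n y z i = 0"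
  unfolding hbr_def by simp

lemma hbr_inner: "hbr m n x (hbr m n y z) = (\<lambda>_. 0)"
proof
  fix t
  show "hbr m n x (hbr m n y z) t = 0"
  proof (cases "m + n \<le> t \<and> t < (m+n) + (m+n)*(m+n)")
    case True
    note r = range_ij[OF True[THEN conjunct1] True[THEN conjunct2]]
    show ?thesis by (rule hbr_zero_args[where w="hbr m n y z"], rule hbr_small[OF r(1)], rule hbr_small[OF r(2)])
  qed (auto simp: hbr_def[of m n x])
qed

lemma qpar_W:
  assumes "m + n \<le> t" "t < (m+n) + (m+n)*(m+n)"
  shows "qpar m n t = (qpar m n ((t-(m+n)) div (m+n)) \<noteq> qpar m n ((t-(m+n)) mod (m+n)))"
  using range_ij[OF assms] assms unfolding qpar_def by auto

lemma homog_HH: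
  assumes "d \<in> {0,1}" "x \<in> homog (HH m n) d"
  shows "\<And>t. qpar m n t \<noteq> (d = 1) \<Longrightarrow> x t = 0"
  using assms unfolding homog_def HH_def by (auto split: if_splits)

lemma homog_HH_car:
  assumes "x \<in> homog (HH m n) d"
  shows "x \<in> scar (HH m n)"
  using assms unfolding homog_def HH_def by (auto split: if_splits)

lemma alg_antisym:
  fixes A B s \<sigma> :: "'f::field"
  assumes "A = 0 \<or> s = \<sigma>" "B = 0 \<or> s = \<sigma>" "\<sigma> * \<sigma> = 1"
  shows "A - s * B = - \<sigma> * (B - s * A)"
  using assms by (auto simp: algebra_simps)

lemma HH_lie:
  shows "lie_superalgebra (HH m n :: (nat \<Rightarrow> 'f::field, 'f) lsa)"
proof -
  let ?N = "(m+n) + (m+n)*(m+n)"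
  let ?H = "HH m n :: (nat \<Rightarrow> 'f, 'f) lsa"
  have inv: "\<exists>y\<in>scar ?H. sadd ?H x y = szero ?H" if x: "x \<in> scar ?H" for x
    by (rule bexI[of _ "\<lambda>i. - x i"]) (use x in \<open>auto simp: HH_def\<close>)
  have V: "vspace ?H"
    unfolding vspace_def using inv
    by (auto simp: algebra_simps fun_eq_iff HH_def)
  have S1: "subspace_of (sev ?H) ?H" unfolding subspace_of_def HH_def by auto
  have S2: "subspace_of (sod ?H) ?H" unfolding subspace_of_def HH_def by auto
  have I: "sev ?H \<inter> sod ?H = {szero ?H}" unfolding HH_def apply (auto simp: fun_eq_iff) by metis
  have D: "\<forall>x\<in>scar ?H. \<exists>a\<in>sev ?H. \<exists>b\<in>sod ?H. x = sadd ?H a b"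
  proof
    fix x assume x: "x \<in> scar ?H"
    let ?a = "\<lambda>t. if qpar m n t then 0 else x t"
    let ?b = "\<lambda>t. if qpar m n t then x t else 0"
    have "?a \<in> sev ?H" "?b \<in> sod ?H" "x = sadd ?H ?a ?b" using x unfolding HH_def by (auto simp: fun_eq_iff)
    thus "\<exists>a\<in>sev ?H. \<exists>b\<in>sod ?H. x = sadd ?H a b" by blast
  qed
  have C: "\<forall>x\<in>scar ?H. \<forall>y\<in>scar ?H. sbr ?H x y \<in> scar ?H" unfolding HH_def hbr_def by auto
  have B1: "\<forall>x\<in>scar ?H. \<forall>y\<in>scar ?H. \<forall>z\<in>scar ?H. sbr ?H (sadd ?H x y) z = sadd ?H (sbr ?H x z) (sbr ?H y z)"
    unfolding HH_def hbr_def by (auto simp: fun_eq_iff algebra_simps)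
  have B2: "\<forall>x\<in>scar ?H. \<forall>y\<in>scar ?H. \<forall>z\<in>scar ?H. sbr ?H x (sadd ?H y z) = sadd ?H (sbr ?H x y) (sbr ?H x z)"
    unfolding HH_def hbr_def by (auto simp: fun_eq_iff algebra_simps)
  have B3: "\<forall>c. \<forall>x\<in>scar ?H. \<forall>y\<in>scar ?H. sbr ?H (ssmul ?H c x) y = ssmul ?H c (sbr ?H x y)"
    unfolding HH_def hbr_def by (auto simp: fun_eq_iff algebra_simps)
  have B4: "\<forall>c. \<forall>x\<in>scar ?H. \<forall>y\<in>scar ?H. sbr ?H x (ssmul ?H c y) = ssmul ?H c (sbr ?H x y)"
    unfolding HH_def hbr_def by (auto simp: fun_eq_iff algebra_simps)
  have P: "sbr ?H x y \<in> homog ?H ((d + e) mod 2)"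
    if d: "d \<in> {0,1}" and e: "e \<in> {0,1}" and x: "x \<in> homog ?H d" and y: "y \<in> homog ?H e" for d e x y
  proof -
    have xc: "x \<in> scar ?H" and yc: "y \<in> scar ?H" using x y by (auto intro: homog_HH_car)
    have hx: "\<And>t. qpar m n t \<noteq> (d = 1) \<Longrightarrow> x t = 0" using homog_HH[OF d x] by blast
    have hy: "\<And>t. qpar m n t \<noteq> (e = 1) \<Longrightarrow> y t = 0" using homog_HH[OF e y] by blast
    have z: "hbr m n x y t = 0" if t: "qpar m n t \<noteq> ((d + e) mod 2 = 1)" for t
    proof (cases "m + n \<le> t \<and> t < ?N")
      case True
      define i where "i = (t-(m+n)) div (m+n)"
      define j where "j = (t-(m+n)) mod (m+n)"
      have q: "qpar m n t = (qpar m n i \<noteq> qpar m n j)" using qpar_W[of m n t] True i_def j_def by simp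
      have h1: "x i * y j = 0"
      proof (rule ccontr)
        assume "x i * y j \<noteq> 0"
        hence "qpar m n i = (d = 1)" "qpar m n j = (e = 1)" using hx hy by auto
        thus False using t q d e by auto
      qed
      have h2: "x j * y i = 0"
      proof (rule ccontr)
        assume "x j * y i \<noteq> 0"
        hence "qpar m n j = (d = 1)" "qpar m n i = (e = 1)" using hx hy by auto
        thus False using t q d e by auto
      qed
      have hb: "hbr m n x y t = x i * y j - sg m i j * (x j * y i)"
        unfolding hbr_def using True i_def j_def by (simp add: mult.assoc)
      show ?thesis unfolding hb h1 h2 by simp
    qed (auto simp: hbr_def)
    have "hbr m n x y \<in> scar ?H" using C xc yc by (simp add: HH_def)
    thus ?thesis using z d e unfolding homog_def HH_def by (auto split: if_splits)
  qed
  have A: "sbr ?H x y = ssmul ?H (- ssign d e) (sbr ?H y x)"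
    if d: "d \<in> {0,1}" and e: "e \<in> {0,1}" and x: "x \<in> homog ?H d" and y: "y \<in> homog ?H e" for d e x y
  proof -
    have hx: "\<And>t. qpar m n t \<noteq> (d = 1) \<Longrightarrow> x t = 0" using homog_HH[OF d x] by blast
    have hy: "\<And>t. qpar m n t \<noteq> (e = 1) \<Longrightarrow> y t = 0" using homog_HH[OF e y] by blast
    define \<sigma> where "\<sigma> = (ssign d e :: 'f)"
    have \<sigma>: "\<sigma> = (if d = 1 \<and> e = 1 then -1 else 1)" using d e unfolding \<sigma>_def ssign_def by auto
    have \<sigma>\<sigma>: "\<sigma> * \<sigma> = 1" using \<sigma> by simp
    have "hbr m n x y t = - \<sigma> * hbr m n y x t" for t
    proof (cases "m + n \<le> t \<and> t < ?N")
      case True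
      define i where "i = (t-(m+n)) div (m+n)"
      define j where "j = (t-(m+n)) mod (m+n)"
      have qi: "qpar m n i = (m \<le> i)" "qpar m n j = (m \<le> j)"
        using range_ij[of "m+n" t] True unfolding i_def j_def qpar_def by auto
      have a1: "x i * y j = 0 \<or> sg m i j = \<sigma>"
      proof (cases "x i * y j = 0")
        case False
        hence "qpar m n i = (d = 1)" "qpar m n j = (e = 1)" using hx hy by auto
        thus ?thesis using qi \<sigma> unfolding sg_def by auto
      qed simp
      have a2: "x j * y i = 0 \<or> sg m i j = \<sigma>"
      proof (cases "x j * y i = 0")
        case False
        hence "qpar m n j = (d = 1)" "qpar m n i = (e = 1)" using hx hy by auto
        thus ?thesis using qi \<sigma> unfolding sg_def by auto
      qed simp
      have "x i * y j - sg m i j * (x j * y i) = - \<sigma> * (x j * y i - sg m i j * (x i * y j))"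
        by (rule alg_antisym[OF a1 a2 \<sigma>\<sigma>])
      thus ?thesis unfolding hbr_def using True i_def j_def by (simp add: algebra_simps)
    qed (auto simp: hbr_def)
    thus ?thesis unfolding HH_def \<sigma>_def by (simp add: fun_eq_iff)
  qed
  have J: "sadd ?H (sadd ?H (ssmul ?H (ssign d f) (sbr ?H x (sbr ?H y z)))
                       (ssmul ?H (ssign e d) (sbr ?H y (sbr ?H z x))))
               (ssmul ?H (ssign f e) (sbr ?H z (sbr ?H x y))) = szero ?H" for d e f x y z
    unfolding HH_def by (simp add: hbr_inner)
  have P': "\<forall>d\<in>{0,1}. \<forall>e\<in>{0,1}. \<forall>x\<in>homog ?H d. \<forall>y\<in>homog ?H e.
        sbr ?H x y \<in> homog ?H ((d + e) mod 2)" using P by blast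
  have A': "\<forall>d\<in>{0,1}. \<forall>e\<in>{0,1}. \<forall>x\<in>homog ?H d. \<forall>y\<in>homog ?H e.
        sbr ?H x y = ssmul ?H (- ssign d e) (sbr ?H y x)" using A by blast
  have J': "\<forall>d\<in>{0,1}. \<forall>e\<in>{0,1}. \<forall>f\<in>{0,1}.
        \<forall>x\<in>homog ?H d. \<forall>y\<in>homog ?H e. \<forall>z\<in>homog ?H f.
        sadd ?H (sadd ?H (ssmul ?H (ssign d f) (sbr ?H x (sbr ?H y z)))
                       (ssmul ?H (ssign e d) (sbr ?H y (sbr ?H z x))))
               (ssmul ?H (ssign f e) (sbr ?H z (sbr ?H x y))) = szero ?H" using J by blast
  show ?thesis unfolding lie_superalgebra_def
    by (intro conjI V S1 S2 I D C B1 B2 B3 B4 P' A' J')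
qed



lemma hbr_zero_args1:
  "v ((t-(m+n)) div (m+n)) = 0 \<Longrightarrow> v ((t-(m+n)) mod (m+n)) = 0 \<Longrightarrow> hbr m n v w t = 0"
  unfolding hbr_def by simp

lemma hbr_low_zero:
  assumes "\<forall>i<m+n. v i = 0" shows "hbr m n v w = (\<lambda>_. 0)"
proof
  fix t show "hbr m n v w t = 0"
  proof (cases "m + n \<le> t \<and> t < (m+n) + (m+n)*(m+n)")
    case True
    note r = range_ij[OF True[THEN conjunct1] True[THEN conjunct2]]
    show ?thesis by (rule hbr_zero_args1) (use r assms in auto)
  qed (auto simp: hbr_def)
qed

lemma center_HH:
  assumes two: "(2::'f::field) \<noteq> 0" and c: "(m = 0 \<and> n = 1) \<or> m + n \<ge> 2"
  shows "center (HH m n :: (nat \<Rightarrow> 'f, 'f) lsa)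
     = {v. (\<forall>t\<ge>(m+n) + (m+n)*(m+n). v t = 0) \<and> (\<forall>i<m+n. v i = 0)}"
proof
  let ?k = "m + n"
  let ?N = "(m+n) + (m+n)*(m+n)"
  show "{v. (\<forall>t\<ge>?N. v t = 0) \<and> (\<forall>i<?k. v i = 0)} \<subseteq> center (HH m n :: (nat \<Rightarrow> 'f, 'f) lsa)"
    unfolding center_def HH_def using hbr_low_zero by auto
  show "center (HH m n :: (nat \<Rightarrow> 'f, 'f) lsa) \<subseteq> {v. (\<forall>t\<ge>?N. v t = 0) \<and> (\<forall>i<?k. v i = 0)}"
  proof
    fix v :: "nat \<Rightarrow> 'f" assume v: "v \<in> center (HH m n :: (nat \<Rightarrow> 'f, 'f) lsa)"
    have vc: "\<forall>t\<ge>?N. v t = 0" using v unfolding center_def HH_def by auto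
    have vb: "\<And>x. \<forall>t\<ge>?N. x t = 0 \<Longrightarrow> hbr m n v x = (\<lambda>_. 0)" using v unfolding center_def HH_def by auto
    have "v i = 0" if i: "i < ?k" for i
    proof (rule ccontr)
      assume vi: "v i \<noteq> 0"
      define j where "j = (if m \<le> i then i else if i = 0 then 1 else 0)"
      have jk: "j < ?k" using i c unfolding j_def by auto
      have ji: "m > i \<Longrightarrow> j \<noteq> i" unfolding j_def by auto
      define x where "x = (\<lambda>t. if t = j then (1::'f) else 0)"
      have "?k \<le> ?N" by simp
      hence xc: "\<forall>t\<ge>?N. x t = 0" using jk unfolding x_def by auto
      define t where "t = ?k + i * ?k + j"
      have t1: "?k \<le> t" unfolding t_def by simp
      have "i * ?k + j < Suc i * ?k" using jk by simp
      also have "\<dots> \<le> ?k * ?k" using i by (metis Suc_leI mult_le_mono1)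
      finally have t2: "t < ?N" unfolding t_def by simp
      have e: "t - ?k = j + i * ?k" unfolding t_def by simp
      have kp: "?k \<noteq> 0" using jk by arith
      have dv: "(t - ?k) div ?k = i" and md: "(t - ?k) mod ?k = j" unfolding e using jk kp by simp_all
      have "hbr m n v x t = v i * x j - sg m i j * v j * x i"
        unfolding hbr_def using t1 t2 dv md by simp
      also have "\<dots> \<noteq> 0"
      proof (cases "m \<le> i")
        case True
        hence "j = i" unfolding j_def by simp
        hence "v i * x j - sg m i j * v j * x i = 2 * v i" unfolding x_def sg_def using True by simp
        thus ?thesis using two vi by simp
      next
        case False
        thus ?thesis using ji vi unfolding x_def by simp
      qed
      finally show False using vb[OF xc] by (simp add: fun_eq_iff)
    qed
    thus "v \<in> {v. (\<forall>t\<ge>?N. v t = 0) \<and> (\<forall>i<?k. v i = 0)}" using vc by auto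
  qed
qed

lemma capable_HH:
  assumes two: "(2::'f::field) \<noteq> 0" and c: "(m = 0 \<and> n = 1) \<or> m + n \<ge> 2"
  shows "capable_in TYPE(nat \<Rightarrow> 'f) (abelian_lsa m n :: (nat \<Rightarrow> 'f, 'f) lsa)"
proof -
  let ?k = "m + n"
  let ?N = "(m+n) + (m+n)*(m+n)"
  define H where "H = (HH m n :: (nat \<Rightarrow> 'f, 'f) lsa)"
  define A where "A = (abelian_lsa m n :: (nat \<Rightarrow> 'f, 'f) lsa)"
  define Z where "Z = {v::nat \<Rightarrow> 'f. (\<forall>t\<ge>?N. v t = 0) \<and> (\<forall>i<?k. v i = 0)}"
  have ZC: "center H = Z" unfolding H_def Z_def using center_HH[OF two c] .
  define Q where "Q = quot H Z"
  have kN: "?k \<le> ?N" by simp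
  have cosdef: "coset H Z v = {(\<lambda>i. v i + z i) | z. z \<in> Z}" for v
    unfolding coset_def H_def HH_def by simp
  have carH: "scar H = {v. \<forall>t\<ge>?N. v t = 0}" unfolding H_def HH_def by simp
  have carA: "scar A = {v. \<forall>t\<ge>?k. v t = 0}" unfolding A_def abelian_lsa_def by simp
  have AH: "scar A \<subseteq> scar H" unfolding carA carH using kN by auto
  have cos_eq: "coset H Z u = coset H Z v" if u: "u \<in> scar H" and v: "v \<in> scar H"
     and eq: "\<forall>i<?k. u i = v i" for u v
  proof -
    have 1: "coset H Z u \<subseteq> coset H Z v" if u: "u \<in> scar H" and v: "v \<in> scar H"
       and eq: "\<forall>i<?k. u i = v i" for u v
    proof
      fix a assume "a \<in> coset H Z u"
      then obtain z where z: "z \<in> Z" "a = (\<lambda>i. u i + z i)" unfolding cosdef by auto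
      define z' where "z' = (\<lambda>i. u i - v i + z i)"
      have "z' \<in> Z" using z u v eq unfolding z'_def Z_def carH by auto
      moreover have "a = (\<lambda>i. v i + z' i)" unfolding z'_def z by (simp add: fun_eq_iff)
      ultimately show "a \<in> coset H Z v" unfolding cosdef by auto
    qed
    show ?thesis using 1[OF u v eq] 1[OF v u] eq by auto
  qed
  have Z0: "(\<lambda>_. 0) \<in> Z" unfolding Z_def by simp
  have in_cos: "v \<in> coset H Z v" for v unfolding cosdef using Z0 by force
  have cos_imp: "\<forall>i<?k. u i = v i" if "coset H Z u = coset H Z v" for u v
  proof -
    have "u \<in> coset H Z v" using in_cos[of u] that by simp
    then obtain z where "z \<in> Z" "u = (\<lambda>i. v i + z i)" unfolding cosdef by auto
    thus ?thesis unfolding Z_def by auto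
  qed
  define tr where "tr = (\<lambda>h::nat \<Rightarrow> 'f. \<lambda>i. if i < ?k then h i else 0)"
  have trA: "tr h \<in> scar A" for h unfolding tr_def carA by auto
  have trc: "coset H Z h = coset H Z (tr h)" if "h \<in> scar H" for h
    by (rule cos_eq) (use that trA AH in \<open>auto simp: tr_def\<close>)
  define \<phi> where "\<phi> = coset H Z"
  have bij: "bij_betw \<phi> (scar A) (scar Q)"
    unfolding bij_betw_def
  proof
    show "inj_on \<phi> (scar A)"
    proof
      fix u v assume u: "u \<in> scar A" and v: "v \<in> scar A" and e: "\<phi> u = \<phi> v"
      have "\<forall>i<?k. u i = v i" using cos_imp e unfolding \<phi>_def by blast
      hence "u i = v i" for i using u v unfolding carA by (cases "i < ?k") auto
      thus "u = v" by (simp add: fun_eq_iff)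
    qed
    show "\<phi> ` scar A = scar Q"
    proof
      show "\<phi> ` scar A \<subseteq> scar Q" unfolding Q_def quot_def \<phi>_def using AH by auto
      show "scar Q \<subseteq> \<phi> ` scar A"
      proof
        fix X assume "X \<in> scar Q"
        then obtain h where h: "h \<in> scar H" "X = coset H Z h" unfolding Q_def quot_def by auto
        show "X \<in> \<phi> ` scar A" using trc[OF h(1)] h(2) trA unfolding \<phi>_def by auto
      qed
    qed
  qed
  have add: "\<phi> (sadd A x y) = sadd Q (\<phi> x) (\<phi> y)" for x y
  proof -
    have "sadd Q (\<phi> x) (\<phi> y) = {(\<lambda>i. a i + b i) | a b. a \<in> coset H Z x \<and> b \<in> coset H Z y}"
      unfolding Q_def quot_def \<phi>_def H_def HH_def by simp
    also have "\<dots> = coset H Z (\<lambda>i. x i + y i)"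
    proof
      show "{(\<lambda>i. a i + b i) | a b. a \<in> coset H Z x \<and> b \<in> coset H Z y} \<subseteq> coset H Z (\<lambda>i. x i + y i)"
      proof
        fix w assume "w \<in> {(\<lambda>i. a i + b i) | a b. a \<in> coset H Z x \<and> b \<in> coset H Z y}"
        then obtain z1 z2 where z: "z1 \<in> Z" "z2 \<in> Z" "w = (\<lambda>i. (x i + z1 i) + (y i + z2 i))"
          unfolding cosdef by auto
        have "(\<lambda>i. z1 i + z2 i) \<in> Z" using z unfolding Z_def by auto
        moreover have "w = (\<lambda>i. (x i + y i) + (z1 i + z2 i))" using z(3) by (simp add: fun_eq_iff algebra_simps)
        ultimately show "w \<in> coset H Z (\<lambda>i. x i + y i)" unfolding cosdef by auto
      qed
      show "coset H Z (\<lambda>i. x i + y i) \<subseteq> {(\<lambda>i. a i + b i) | a b. a \<in> coset H Z x \<and> b \<in> coset H Z y}"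
      proof
        fix w assume "w \<in> coset H Z (\<lambda>i. x i + y i)"
        then obtain z where z: "z \<in> Z" "w = (\<lambda>i. (x i + y i) + z i)" unfolding cosdef by auto
        have "(\<lambda>i. x i + z i) \<in> coset H Z x" using z unfolding cosdef by auto
        moreover have "y \<in> coset H Z y" by (rule in_cos)
        moreover have "w = (\<lambda>i. (x i + z i) + y i)" using z(2) by (simp add: fun_eq_iff algebra_simps)
        ultimately show "w \<in> {(\<lambda>i. a i + b i) | a b. a \<in> coset H Z x \<and> b \<in> coset H Z y}"
          apply - apply (rule CollectI, rule exI[of _ "\<lambda>i. x i + z i"], rule exI[of _ y]) by auto
      qed
    qed
    finally show ?thesis unfolding \<phi>_def A_def abelian_lsa_def by simp
  qed
  have sm: "\<phi> (ssmul A c x) = ssmul Q c (\<phi> x)" for c x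
  proof -
    have "ssmul Q c (\<phi> x) = {(\<lambda>i. c * a i + z i) | a z. a \<in> coset H Z x \<and> z \<in> Z}"
      unfolding Q_def quot_def \<phi>_def H_def HH_def by simp
    also have "\<dots> = coset H Z (\<lambda>i. c * x i)"
    proof
      show "{(\<lambda>i. c * a i + z i) | a z. a \<in> coset H Z x \<and> z \<in> Z} \<subseteq> coset H Z (\<lambda>i. c * x i)"
      proof
        fix w assume "w \<in> {(\<lambda>i. c * a i + z i) | a z. a \<in> coset H Z x \<and> z \<in> Z}"
        then obtain z1 z where z: "z1 \<in> Z" "z \<in> Z" "w = (\<lambda>i. c * (x i + z1 i) + z i)"
          unfolding cosdef by auto
        have "(\<lambda>i. c * z1 i + z i) \<in> Z" using z unfolding Z_def by auto
        moreover have "w = (\<lambda>i. c * x i + (c * z1 i + z i))" using z(3) by (simp add: fun_eq_iff algebra_simps)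
        ultimately show "w \<in> coset H Z (\<lambda>i. c * x i)" unfolding cosdef by auto
      qed
      show "coset H Z (\<lambda>i. c * x i) \<subseteq> {(\<lambda>i. c * a i + z i) | a z. a \<in> coset H Z x \<and> z \<in> Z}"
      proof
        fix w assume "w \<in> coset H Z (\<lambda>i. c * x i)"
        then obtain z where z: "z \<in> Z" "w = (\<lambda>i. c * x i + z i)" unfolding cosdef by auto
        thus "w \<in> {(\<lambda>i. c * a i + z i) | a z. a \<in> coset H Z x \<and> z \<in> Z}" using in_cos[of x] by blast
      qed
    qed
    finally show ?thesis unfolding \<phi>_def A_def abelian_lsa_def by simp
  qed
  have hbrZ: "hbr m n a b \<in> Z" for a b
    unfolding Z_def using hbr_small[of _ m n a b] by (auto simp: hbr_def)
  have br: "\<phi> (sbr A x y) = sbr Q (\<phi> x) (\<phi> y)" for x y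
  proof -
    have "sbr Q (\<phi> x) (\<phi> y) = {(\<lambda>i. hbr m n a b i + z i) | a b z. a \<in> coset H Z x \<and> b \<in> coset H Z y \<and> z \<in> Z}"
      unfolding Q_def quot_def \<phi>_def H_def HH_def by simp
    also have "\<dots> = coset H Z (\<lambda>_. 0)"
    proof
      show "{(\<lambda>i. hbr m n a b i + z i) | a b z. a \<in> coset H Z x \<and> b \<in> coset H Z y \<and> z \<in> Z} \<subseteq> coset H Z (\<lambda>_. 0)"
      proof
        fix w assume "w \<in> {(\<lambda>i. hbr m n a b i + z i) | a b z. a \<in> coset H Z x \<and> b \<in> coset H Z y \<and> z \<in> Z}"
        then obtain a b z where z: "z \<in> Z" "w = (\<lambda>i. hbr m n a b i + z i)" by auto
        have "w \<in> Z" using z hbrZ[of a b] unfolding Z_def by auto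
        thus "w \<in> coset H Z (\<lambda>_. 0)" unfolding cosdef by auto
      qed
      show "coset H Z (\<lambda>_. 0) \<subseteq> {(\<lambda>i. hbr m n a b i + z i) | a b z. a \<in> coset H Z x \<and> b \<in> coset H Z y \<and> z \<in> Z}"
      proof
        fix w assume "w \<in> coset H Z (\<lambda>_. 0)"
        then obtain z where z: "z \<in> Z" "w = (\<lambda>i. 0 + z i)" unfolding cosdef by auto
        define z' where "z' = (\<lambda>i. z i - hbr m n x y i)"
        have "z' \<in> Z" using z hbrZ[of x y] unfolding Z_def z'_def by auto
        moreover have "w = (\<lambda>i. hbr m n x y i + z' i)" using z(2) unfolding z'_def by (simp add: fun_eq_iff)
        ultimately show "w \<in> {(\<lambda>i. hbr m n a b i + z i) | a b z. a \<in> coset H Z x \<and> b \<in> coset H Z y \<and> z \<in> Z}"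
          using in_cos[of x] in_cos[of y] by blast
      qed
    qed
    finally show ?thesis unfolding \<phi>_def A_def abelian_lsa_def by simp
  qed
  have ev: "\<phi> ` sev A = sev Q"
  proof
    show "\<phi> ` sev A \<subseteq> sev Q"
    proof
      fix X assume "X \<in> \<phi> ` sev A"
      then obtain v where v: "\<forall>i\<ge>m. v i = 0" "X = coset H Z v" unfolding \<phi>_def A_def abelian_lsa_def by auto
      have "v \<in> sev H" using v(1) unfolding H_def HH_def qpar_def by (auto split: if_splits)
      thus "X \<in> sev Q" using v(2) unfolding Q_def quot_def by simp
    qed
    show "sev Q \<subseteq> \<phi> ` sev A"
    proof
      fix X assume "X \<in> sev Q"
      then obtain h where h: "h \<in> sev H" "X = coset H Z h" unfolding Q_def quot_def by auto
      have hc: "h \<in> scar H" using h(1) unfolding H_def HH_def by auto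
      have "tr h \<in> sev A" using h(1) unfolding tr_def A_def abelian_lsa_def H_def HH_def qpar_def
        by (auto split: if_splits)
      thus "X \<in> \<phi> ` sev A" using trc[OF hc] h(2) unfolding \<phi>_def by auto
    qed
  qed
  have od: "\<phi> ` sod A = sod Q"
  proof
    show "\<phi> ` sod A \<subseteq> sod Q"
    proof
      fix X assume "X \<in> \<phi> ` sod A"
      then obtain v where v: "\<forall>i\<ge>?k. v i = 0" "\<forall>i<m. v i = 0" "X = coset H Z v"
        unfolding \<phi>_def A_def abelian_lsa_def by auto
      have "v \<in> sod H" using v(1,2) kN unfolding H_def HH_def qpar_def
        by (auto split: if_splits simp: not_le)
      thus "X \<in> sod Q" using v(3) unfolding Q_def quot_def by simp
    qed
    show "sod Q \<subseteq> \<phi> ` sod A"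
    proof
      fix X assume "X \<in> sod Q"
      then obtain h where h: "h \<in> sod H" "X = coset H Z h" unfolding Q_def quot_def by auto
      have hc: "h \<in> scar H" using h(1) unfolding H_def HH_def by auto
      have "tr h \<in> sod A" using h(1) unfolding tr_def A_def abelian_lsa_def H_def HH_def qpar_def
        by (auto split: if_splits)
      thus "X \<in> \<phi> ` sod A" using trc[OF hc] h(2) unfolding \<phi>_def by auto
    qed
  qed
  have "lsa_iso A Q" unfolding lsa_iso_def using bij add sm br ev od by blast
  moreover have "lie_superalgebra H" unfolding H_def by (rule HH_lie)
  ultimately show ?thesis unfolding capable_in_def A_def Q_def ZC[symmetric] H_def by blast
qed


theorem mainTheorem2:
  fixes m n :: nat
  assumes "(2::'f::field) \<noteq> 0" and "(3::'f) \<noteq> 0"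
    and "m + n \<ge> 1"
  shows "(capable_in TYPE('h) (abelian_lsa m n :: (nat \<Rightarrow> 'f, 'f) lsa)
            \<longrightarrow> ((m = 0 \<and> n = 1) \<or> m + n \<ge> 2))
       \<and> (((m = 0 \<and> n = 1) \<or> m + n \<ge> 2)
            \<longrightarrow> capable_in TYPE(nat \<Rightarrow> 'f) (abelian_lsa m n :: (nat \<Rightarrow> 'f, 'f) lsa))"
proof (intro conjI impI)
  assume cap: "capable_in TYPE('h) (abelian_lsa m n :: (nat \<Rightarrow> 'f, 'f) lsa)"
  show "(m = 0 \<and> n = 1) \<or> m + n \<ge> 2"
  proof (rule ccontr)
    assume "\<not> ((m = 0 \<and> n = 1) \<or> m + n \<ge> 2)"
    hence "m = 1" "n = 0" using assms(3) by auto
    thus False using cap not_capable_1_0[OF assms(1), where 'h='h] by simp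
  qed
next
  assume "(m = 0 \<and> n = 1) \<or> m + n \<ge> 2"
  thus "capable_in TYPE(nat \<Rightarrow> 'f) (abelian_lsa m n :: (nat \<Rightarrow> 'f, 'f) lsa)"
    by (rule capable_HH[OF assms(1)])
qed

end
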